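(* Let $X_i=(K_i,T_{K_i},N_{i,K_i})$, $i=1,\dots,n$, be observed panel count data, let $t_1<\dots<t_m$ be the ordered distinct points of $\{T_{K_i,j}: j=1,\dots,K_i,\ i=1,\dots,n\}$, and let $\hat{\mathbf u}=(\hat u_1,\dots,\hat u_m)=(\hat\Lambda_n(t_1),\dots,\hat\Lambda_n(t_m))$, where $\hat\Lambda_n$ is the NPMLE, i.e. $\hat{\mathbf u}$ maximizes $\phi(\mathbf u\mid\mathbf X)$ over $\Omega=\{\mathbf u: 0\le u_1\le\dots\le u_m<\infty\}$ (with finite maximal value). Then for every real function $\varphi:\mathbb R\to\mathbb R$, $$\sum_{\ell=1}^m \varphi(\hat u_\ell)\Big\{\sum_{i=1}^n \phi_{i,\ell}(\hat{\mathbf u})\Big\}=0.$$ Equivalently, $$\sum_{i=1}^n\Big[\sum_{j=1}^{K_i-1}\varphi(\hat\Lambda_n(T_{K_i,j}))\hat\Lambda_n(T_{K_i,j})\Big\{\tfrac{\Delta N_i(T_{K_i,j+1})}{\Delta\hat\Lambda_n(T_{K_i,j+1})}-\tfrac{\Delta N_i(T_{K_i,j})}{\Delta\hat\Lambda_n(T_{K_i,j})}\Big\}+\varphi(\hat\Lambda_n(T_{K_i,K_i}))\hat\Lambda_n(T_{K_i,K_i})\Big\{1-\tfrac{\Delta N_i(T_{K_i,K_i})}{\Delta\hat\Lambda_n(T_{K_i,K_i})}\Big\}\Big]=0 .$$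
   Context: Panel count data: for subject $i$, $K_i\ge1$ is the number of observation times, $0=T_{K_i,0}<T_{K_i,1}<\dots<T_{K_i,K_i}$ are the observation times, and $N_{i,K_i}=(N_i(T_{K_i,1}),\dots,N_i(T_{K_i,K_i}))$ are the observed values of a counting process $N_i$ with $N_i(0)=0$. Write $\Delta N_i(T_{K_i,j})=N_i(T_{K_i,j})-N_i(T_{K_i,j-1})$ and $\Delta\Lambda(T_{K,j})=\Lambda(T_{K,j})-\Lambda(T_{K,j-1})$ (with $\Lambda(0)=0$). Define the rank function $R(T_{K_i,j})=s$ iff $T_{K_i,j}=t_s$, with $u_{R(T_{K_i,0})}:=0$. The log-likelihood is $$\phi(\mathbf u\mid\mathbf X)=\sum_{i=1}^n\Big[\sum_{j=1}^{K_i}\Delta N_i(T_{K_i,j})\log\{u_{R(T_{K_i,j})}-u_{R(T_{K_i,j-1})}\}-u_{R(T_{K_i,K_i})}\Big].$$ For $\ell=1,\dots,m$, $$\phi_{i,\ell}(\mathbf u)=\sum_{j=1}^{K_i-1}\Big\{\frac{\Delta N_i(T_{K_i,j})}{u_{R(T_{K_i,j})}-u_{R(T_{K_i,j-1})}}-\frac{\Delta N_i(T_{K_i,j+1})}{u_{R(T_{K_i,j+1})}-u_{R(T_{K_i,j})}}\Big\}1_{\{T_{K_i,j}=t_\ell\}}+\Big\{\frac{\Delta N_i(T_{K_i,K_i})}{u_{R(T_{K_i,K_i})}-u_{R(T_{K_i,K_i-1})}}-1\Big\}1_{\{T_{K_i,K_i}=t_\ell\}},$$ so that $\sum_i\phi_{i,\ell}=\partial\phi(\mathbf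 u\mid\mathbf X)/\partial u_\ell$. Terms of the form $0/0$ (zero count over a zero increment) are interpreted as $0$. The NPMLE $\hat\Lambda_n$ is the nondecreasing nonnegative step function with jumps only at $t_1,\dots,t_m$ whose values at $t_1,\dots,t_m$ are $\hat{\mathbf u}$. *)

theory Defs
  imports Complex_Main "HOL-Library.Extended_Real"
begin

text \<open>Panel count data for subjects i = 1..n: K i observation times,
  T i 0 = 0 < T i 1 < ... < T i (K i), observed counts N i j (N i 0 = 0).
  t 1 < ... < t m are the ordered distinct observation times; u l is the
  value at t l (indices 1..m).\<close>

definition rank :: "(nat \<Rightarrow> real) \<Rightarrow> nat \<Rightarrow> real \<Rightarrow> nat" where
  "rank t m x = (THE s. s \<in> {1..m} \<and> t s = x)"

definition uval :: "(nat \<Rightarrow> real) \<Rightarrow> nat \<Rightarrow> (nat \<Rightarrow> nat \<Rightarrow> real) \<Rightarrow> (nat \<Rightarrow> real)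
    \<Rightarrow> nat \<Rightarrow> nat \<Rightarrow> real" where
  "uval t m T u i j = (if j = 0 then 0 else u (rank t m (T i j)))"

definition dN :: "(nat \<Rightarrow> nat \<Rightarrow> nat) \<Rightarrow> nat \<Rightarrow> nat \<Rightarrow> real" where
  "dN N i j = real (N i j) - real (N i (j - 1))"

definition dU :: "(nat \<Rightarrow> real) \<Rightarrow> nat \<Rightarrow> (nat \<Rightarrow> nat \<Rightarrow> real) \<Rightarrow> (nat \<Rightarrow> real)
    \<Rightarrow> nat \<Rightarrow> nat \<Rightarrow> real" where
  "dU t m T u i j = uval t m T u i j - uval t m T u i (j - 1)"

text \<open>One summand  dN * log(increment)  of the log-likelihood, valued in the
  extended reals with the conventions 0 * log 0 = 0 and log 0 = -infinity.\<close>
definition llterm :: "real \<Rightarrow> real \<Rightarrow> ereal" where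
  "llterm a d = (if d > 0 then ereal (a * ln d) else if a = 0 then 0 else -\<infinity>)"

definition loglik :: "nat \<Rightarrow> (nat \<Rightarrow> nat) \<Rightarrow> (nat \<Rightarrow> nat \<Rightarrow> real) \<Rightarrow> (nat \<Rightarrow> nat \<Rightarrow> nat)
    \<Rightarrow> (nat \<Rightarrow> real) \<Rightarrow> nat \<Rightarrow> (nat \<Rightarrow> real) \<Rightarrow> ereal" where
  "loglik n K T N t m u =
     (\<Sum>i=1..n. (\<Sum>j=1..K i. llterm (dN N i j) (dU t m T u i j))
                 - ereal (uval t m T u i (K i)))"

definition Omega :: "nat \<Rightarrow> (nat \<Rightarrow> real) set" where
  "Omega m = {u. (1 \<le> m \<longrightarrow> 0 \<le> u 1) \<and> (\<forall>l. 1 \<le> l \<and> l < m \<longrightarrow> u l \<le> u (Suc l))}"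

end

theory Submission
  imports Defs
begin

lemma sum_ereal_minf:
  fixes f :: "'a \<Rightarrow> ereal"
  assumes "finite A" "\<forall>x\<in>A. f x \<noteq> \<infinity>" "a \<in> A" "f a = -\<infinity>"
  shows "sum f A = -\<infinity>"
proof -
  have "sum f (A - {a}) \<noteq> \<infinity>" using assms by (simp add: sum_Pinfty)
  moreover have "sum f A = f a + sum f (A - {a})"
    using assms by (simp add: sum.remove)
  ultimately show ?thesis using assms by simp
qed

lemma ev_pos:
  fixes a c :: real
  assumes "0 < a"
  shows "eventually (\<lambda>e. 0 < a + e * c) (nhds 0)"
proof -
  have "((\<lambda>e. a + e * c) \<longlongrightarrow> a + 0 * c) (nhds 0)"
    by (intro tendsto_intros filterlim_ident)
  then show ?thesis using assms by (auto dest: order_tendstoD(1))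
qed

lemma telescope:
  fixes r g :: "nat \<Rightarrow> real"
  assumes "g 0 = 0"
  shows "(\<Sum>j=1..Suc k. r j * (g j - g (j - 1))) - g (Suc k)
       = -((\<Sum>j=1..Suc k - 1. g j * (r (Suc j) - r j)) + g (Suc k) * (1 - r (Suc k)))"
proof (induction k)
  case 0
  then show ?case using assms by (simp add: algebra_simps)
next
  case (Suc k)
  have a: "(\<Sum>j=1..Suc (Suc k). r j * (g j - g (j - 1)))
     = (\<Sum>j=1..Suc k. r j * (g j - g (j - 1))) + r (Suc (Suc k)) * (g (Suc (Suc k)) - g (Suc k))"
    by simp
  have b: "(\<Sum>j=1..Suc (Suc k) - 1. g j * (r (Suc j) - r j))
     = (\<Sum>j=1..Suc k - 1. g j * (r (Suc j) - r j)) + g (Suc k) * (r (Suc (Suc k)) - r (Suc k))"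
    by simp
  show ?case unfolding a b using Suc by (simp add: algebra_simps)
qed

theorem lemma1:
  fixes n m :: nat and K :: "nat \<Rightarrow> nat" and T :: "nat \<Rightarrow> nat \<Rightarrow> real"
    and N :: "nat \<Rightarrow> nat \<Rightarrow> nat" and t u :: "nat \<Rightarrow> real" and \<phi> :: "real \<Rightarrow> real"
  assumes K_pos: "\<forall>i\<in>{1..n}. 1 \<le> K i"
    and T_zero: "\<forall>i\<in>{1..n}. T i 0 = 0"
    and T_incr: "\<forall>i\<in>{1..n}. \<forall>j<K i. T i j < T i (Suc j)"
    and N_zero: "\<forall>i\<in>{1..n}. N i 0 = 0"
    and N_mono: "\<forall>i\<in>{1..n}. \<forall>j<K i. N i j \<le> N i (Suc j)"
    and t_mono: "strict_mono_on {1..m} t"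
    and t_range: "t ` {1..m} = {T i j | i j. i \<in> {1..n} \<and> j \<in> {1..K i}}"
    and u_in: "u \<in> Omega m"
    and u_finite: "loglik n K T N t m u \<noteq> -\<infinity>"
    and u_max: "\<forall>v\<in>Omega m. loglik n K T N t m v \<le> loglik n K T N t m u"
  shows "(\<Sum>i=1..n.
            (\<Sum>j=1..K i - 1. \<phi> (uval t m T u i j) * uval t m T u i j *
                (dN N i (Suc j) / dU t m T u i (Suc j) - dN N i j / dU t m T u i j))
            + \<phi> (uval t m T u i (K i)) * uval t m T u i (K i) *
                (1 - dN N i (K i) / dU t m T u i (K i))) = 0"
proof -
  define U where "U i j = uval t m T u i j" for i j
  define g where "g x = \<phi> x * x" for x
  define e where "e i j = g (U i j) - g (U i (j - 1))" for i j
  define v where "v \<epsilon> = (\<lambda>l. u l + \<epsilon> * g (u l))" for \<epsilon>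
  define S where "S = Sigma {1..n} (\<lambda>i. {1..K i})"
  define F where "F \<epsilon> = (\<Sum>i=1..n. (\<Sum>j=1..K i. (if dN N i j = 0 then 0
        else dN N i j * ln (dU t m T u i j + \<epsilon> * e i j))) - (U i (K i) + \<epsilon> * g (U i (K i))))"
    for \<epsilon>
  define D where "D = (\<Sum>i=1..n. (\<Sum>j=1..K i. dN N i j / dU t m T u i j * e i j) - g (U i (K i)))"
  have g0: "g 0 = 0" by (simp add: g_def)
  have uv: "uval t m T (v \<epsilon>) i j = U i j + \<epsilon> * g (U i j)" for \<epsilon> i j
    by (simp add: uval_def U_def v_def g0)
  have dUv: "dU t m T (v \<epsilon>) i j = dU t m T u i j + \<epsilon> * e i j" for \<epsilon> i j
    by (simp add: dU_def uv e_def U_def algebra_simps)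
  have finS: "finite S" by (simp add: S_def)
  have dpos: "0 < dU t m T u i j" if "(i, j) \<in> S" "dN N i j \<noteq> 0" for i j
  proof (rule ccontr)
    assume neg: "\<not> 0 < dU t m T u i j"
    have ninf: "llterm a d \<noteq> \<infinity>" for a d by (simp add: llterm_def)
    have i: "i \<in> {1..n}" and j: "j \<in> {1..K i}" using that by (auto simp: S_def)
    have "(\<Sum>j=1..K i. llterm (dN N i j) (dU t m T u i j)) = -\<infinity>"
      by (rule sum_ereal_minf[OF _ _ j]) (use neg that(2) ninf in \<open>auto simp: llterm_def\<close>)
    then have inner: "(\<Sum>j=1..K i. llterm (dN N i j) (dU t m T u i j)) - ereal (uval t m T u i (K i)) = -\<infinity>"
      by simp
    have "loglik n K T N t m u = -\<infinity>"
      unfolding loglik_def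
    proof (rule sum_ereal_minf[where a=i])
      show "\<forall>x\<in>{1..n}. (\<Sum>j = 1..K x. llterm (dN N x j) (dU t m T u x j)) - ereal (uval t m T u x (K x)) \<noteq> \<infinity>"
      proof
        fix x assume "x \<in> {1..n}"
        have "(\<Sum>j = 1..K x. llterm (dN N x j) (dU t m T u x j)) \<noteq> \<infinity>"
          using ninf by (simp add: sum_Pinfty)
        then show "(\<Sum>j = 1..K x. llterm (dN N x j) (dU t m T u x j)) - ereal (uval t m T u x (K x)) \<noteq> \<infinity>"
          by (cases "(\<Sum>j = 1..K x. llterm (dN N x j) (dU t m T u x j))") auto
      qed
    qed (use i inner in simp_all)
    with u_finite show False by simp
  qed
  have llv: "loglik n K T N t m (v \<epsilon>) = ereal (F \<epsilon>)"
    if pos: "\<forall>(i,j)\<in>S. dN N i j \<noteq> 0 \<longrightarrow> 0 < dU t m T u i j + \<epsilon> * e i j" for \<epsilon>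
  proof -
    have "llterm (dN N i j) (dU t m T (v \<epsilon>) i j) = ereal (if dN N i j = 0 then 0
        else dN N i j * ln (dU t m T u i j + \<epsilon> * e i j))" if "i \<in> {1..n}" "j \<in> {1..K i}" for i j
      using pos that by (auto simp: llterm_def dUv S_def)
    then show ?thesis
      unfolding loglik_def F_def
      by (simp add: uv U_def[symmetric] del: sum_ereal) simp
  qed
  have v0: "v 0 = u" by (simp add: v_def fun_eq_iff)
  have llu: "loglik n K T N t m u = ereal (F 0)"
    using llv[of 0] dpos v0 by auto
  have ev1: "eventually (\<lambda>\<epsilon>. \<forall>(i,j)\<in>S. dN N i j \<noteq> 0 \<longrightarrow> 0 < dU t m T u i j + \<epsilon> * e i j) (nhds 0)"
    using finS
  proof (intro eventually_ball_finite ballI)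
    fix x assume "x \<in> S"
    then obtain i j where x: "x = (i, j)" "(i,j) \<in> S" by (cases x) auto
    show "eventually (\<lambda>\<epsilon>. case x of (i,j) \<Rightarrow> dN N i j \<noteq> 0 \<longrightarrow> 0 < dU t m T u i j + \<epsilon> * e i j) (nhds 0)"
    proof (cases "dN N i j = 0")
      case True then show ?thesis using x by simp
    next
      case False
      then show ?thesis using x ev_pos[OF dpos[OF x(2) False], of "e i j"]
        by (auto elim: eventually_mono)
    qed
  qed
  have ev2: "eventually (\<lambda>\<epsilon>. \<forall>l\<in>{1..<m}. v \<epsilon> l \<le> v \<epsilon> (Suc l)) (nhds 0)"
  proof (intro eventually_ball_finite ballI finite_atLeastLessThan)
    fix l assume l: "l \<in> {1..<m}"
    have le: "u l \<le> u (Suc l)" using u_in l by (auto simp: Omega_def)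
    show "eventually (\<lambda>\<epsilon>. v \<epsilon> l \<le> v \<epsilon> (Suc l)) (nhds 0)"
    proof (cases "u l = u (Suc l)")
      case True then show ?thesis by (simp add: v_def)
    next
      case False
      then have "0 < u (Suc l) - u l" using le by simp
      from ev_pos[OF this, of "g (u (Suc l)) - g (u l)"]
      show ?thesis by (rule eventually_mono) (simp add: v_def algebra_simps)
    qed
  qed
  have ev3: "eventually (\<lambda>\<epsilon>. 1 \<le> m \<longrightarrow> 0 \<le> v \<epsilon> 1) (nhds 0)"
  proof (cases "1 \<le> m")
    case True
    then have u1: "0 \<le> u 1" using u_in by (simp add: Omega_def)
    show ?thesis
    proof (cases "u 1 = 0")
      case True then show ?thesis by (simp add: v_def g0)
    next
      case False
      then have "0 < u 1" using u1 by simp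
      from ev_pos[OF this, of "g (u 1)"]
      show ?thesis by (rule eventually_mono) (simp add: v_def)
    qed
  qed simp
  have ev: "eventually (\<lambda>\<epsilon>. F \<epsilon> \<le> F 0) (nhds 0)"
    using ev1 ev2 ev3
  proof eventually_elim
    case (elim \<epsilon>)
    have "v \<epsilon> \<in> Omega m" using elim(2,3) by (auto simp: Omega_def)
    then have "loglik n K T N t m (v \<epsilon>) \<le> loglik n K T N t m u" using u_max by blast
    then show ?case using llv[OF elim(1)] llu by simp
  qed
  then obtain d where d: "0 < d" "\<forall>y. dist y 0 < d \<longrightarrow> F y \<le> F 0"
    by (auto simp: eventually_nhds_metric)
  have der: "(F has_real_derivative D) (at 0)"
    unfolding F_def D_def
  proof (intro DERIV_sum DERIV_diff)
    fix i assume i: "i \<in> {1..n}"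
    show "((\<lambda>x. U i (K i) + x * g (U i (K i))) has_real_derivative g (U i (K i))) (at 0)"
      by (auto intro!: derivative_eq_intros)
    fix j assume j: "j \<in> {1..K i}"
    show "((\<lambda>x. if dN N i j = 0 then 0 else dN N i j * ln (dU t m T u i j + x * e i j))
        has_real_derivative dN N i j / dU t m T u i j * e i j) (at 0)"
    proof (cases "dN N i j = 0")
      case True then show ?thesis by simp
    next
      case False
      have p: "0 < dU t m T u i j" using dpos[OF _ False] i j by (simp add: S_def)
      show ?thesis using False p
        by (auto intro!: derivative_eq_intros)
    qed
  qed
  have D0: "D = 0"
    by (rule DERIV_local_max[OF der d(1)]) (use d(2) in \<open>auto simp: dist_real_def\<close>)
  have trm: "(\<Sum>j=1..K i - 1. \<phi> (uval t m T u i j) * uval t m T u i j *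
                (dN N i (Suc j) / dU t m T u i (Suc j) - dN N i j / dU t m T u i j))
            + \<phi> (uval t m T u i (K i)) * uval t m T u i (K i) *
                (1 - dN N i (K i) / dU t m T u i (K i))
      = -((\<Sum>j=1..K i. dN N i j / dU t m T u i j * e i j) - g (U i (K i)))"
    if i: "i \<in> {1..n}" for i
  proof -
    obtain k where k: "K i = Suc k" using K_pos i by (metis Suc_le_D One_nat_def)
    have "(\<Sum>j=1..Suc k. dN N i j / dU t m T u i j * ((\<lambda>j. g (U i j)) j - (\<lambda>j. g (U i j)) (j - 1)))
        - (\<lambda>j. g (U i j)) (Suc k)
      = -((\<Sum>j=1..Suc k - 1. (\<lambda>j. g (U i j)) j * ((\<lambda>j. dN N i j / dU t m T u i j) (Suc j)
           - (\<lambda>j. dN N i j / dU t m T u i j) j))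
          + (\<lambda>j. g (U i j)) (Suc k) * (1 - (\<lambda>j. dN N i j / dU t m T u i j) (Suc k)))"
      by (rule telescope) (simp add: U_def uval_def g0)
    then show ?thesis unfolding k e_def by (simp add: g_def U_def)
  qed
  have "(\<Sum>i=1..n.
            (\<Sum>j=1..K i - 1. \<phi> (uval t m T u i j) * uval t m T u i j *
                (dN N i (Suc j) / dU t m T u i (Suc j) - dN N i j / dU t m T u i j))
            + \<phi> (uval t m T u i (K i)) * uval t m T u i (K i) *
                (1 - dN N i (K i) / dU t m T u i (K i))) = - D"
    unfolding D_def sum_negf[symmetric] by (rule sum.cong[OF refl trm])
  then show ?thesis using D0 by simp
qed

end
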